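(* (a) Let $k\ge 4$ be even and let $C_k=v_1v_2\cdots v_kv_1$. For every homomorphism $g$ from $\bar C_k$ to $\bar C_k$ that is not surjective on vertices, there are two distinct vertices $x\ne y$ with $g(x)=g(y)\in\{v_1,v_k\}$. (b) Let $k\ge 4$ and $P_k=v_1v_2\cdots v_k$. For every homomorphism $g$ from $\bar P_k$ to $\bar P_k$ that is not surjective on vertices, there are two distinct vertices $x\ne y$ with $g(x)=g(y)\in\{v_1,v_k\}$.
   Context: $\bar F$ denotes the complement of $F$. A homomorphism $F\to F'$ is a map $V(F)\to V(F')$ sending edges to edges. *)

theory Defs
  imports Main
begin

text \<open>Vertices v_1..v_k are represented by the naturals 1..k.\<close>

definition path_adj :: "nat \<Rightarrow> nat \<Rightarrow> nat \<Rightarrow> bool" where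
  "path_adj k i j \<longleftrightarrow> i \<in> {1..k} \<and> j \<in> {1..k} \<and> (j = i + 1 \<or> i = j + 1)"

definition cycle_adj :: "nat \<Rightarrow> nat \<Rightarrow> nat \<Rightarrow> bool" where
  "cycle_adj k i j \<longleftrightarrow> path_adj k i j \<or> (i = 1 \<and> j = k) \<or> (i = k \<and> j = 1)"

definition compl_adj :: "nat \<Rightarrow> (nat \<Rightarrow> nat \<Rightarrow> bool) \<Rightarrow> nat \<Rightarrow> nat \<Rightarrow> bool" where
  "compl_adj k E i j \<longleftrightarrow> i \<in> {1..k} \<and> j \<in> {1..k} \<and> i \<noteq> j \<and> \<not> E i j"

definition is_hom :: "nat set \<Rightarrow> (nat \<Rightarrow> nat \<Rightarrow> bool) \<Rightarrow> nat set \<Rightarrow> (nat \<Rightarrow> nat \<Rightarrow> bool) \<Rightarrow> (nat \<Rightarrow> nat) \<Rightarrow> bool" where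
  "is_hom V E W F g \<longleftrightarrow> g ` V \<subseteq> W \<and> (\<forall>x\<in>V. \<forall>y\<in>V. E x y \<longrightarrow> F (g x) (g y))"

end

theory Submission
  imports Defs
begin

lemma tri_path: "path_adj k a b \<Longrightarrow> path_adj k b c \<Longrightarrow> path_adj k a c \<Longrightarrow> False"
  unfolding path_adj_def by auto

lemma tri_cycle: "k \<ge> 4 \<Longrightarrow> cycle_adj k a b \<Longrightarrow> cycle_adj k b c \<Longrightarrow> cycle_adj k a c \<Longrightarrow> False"
  unfolding cycle_adj_def path_adj_def by auto

lemma irr_path: "\<not> path_adj k a a" unfolding path_adj_def by auto
lemma irr_cycle: "k \<ge> 4 \<Longrightarrow> \<not> cycle_adj k a a" unfolding cycle_adj_def path_adj_def by auto
lemma sym_path: "path_adj k a b \<Longrightarrow> path_adj k b a" unfolding path_adj_def by auto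
lemma sym_cycle: "cycle_adj k a b \<Longrightarrow> cycle_adj k b a" unfolding cycle_adj_def path_adj_def by auto

lemma hom_prop:
  assumes "is_hom {1..k} (compl_adj k E) {1..k} (compl_adj k E) g"
    "x \<in> {1..k}" "y \<in> {1..k}" "x \<noteq> y" "\<not> E x y"
  shows "g x \<noteq> g y \<and> \<not> E (g x) (g y)"
  using assms unfolding is_hom_def compl_adj_def by blast

lemma count:
  fixes V :: "nat set"
  assumes "finite V"
    and tri: "\<And>a b c. a \<in> V \<Longrightarrow> b \<in> V \<Longrightarrow> c \<in> V \<Longrightarrow> a \<noteq> b \<Longrightarrow> b \<noteq> c \<Longrightarrow> a \<noteq> c
        \<Longrightarrow> g a = g b \<Longrightarrow> g b = g c \<Longrightarrow> False"
  shows "card V \<le> card (g ` V) + card {w\<in>g ` V. \<exists>a\<in>V. \<exists>b\<in>V. a \<noteq> b \<and> g a = w \<and> g b = w}"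
proof -
  define D where "D = {w\<in>g ` V. \<exists>a\<in>V. \<exists>b\<in>V. a \<noteq> b \<and> g a = w \<and> g b = w}"
  define m where "m x = (LEAST y. y \<in> V \<and> g y = g x)" for x
  have m: "m x \<in> V \<and> g (m x) = g x" if "x \<in> V" for x
    unfolding m_def by (rule LeastI[of _ x]) (use that in auto)
  define h where "h x = (if x = m x then Inl (g x) else Inr (g x))" for x
  have "inj_on h V"
  proof (rule inj_onI)
    fix x y assume xy: "x \<in> V" "y \<in> V" "h x = h y"
    show "x = y"
    proof (cases "x = m x")
      case True
      then show ?thesis using xy unfolding h_def m_def by (auto split: if_splits)
    next
      case False
      then have "y \<noteq> m y" "g x = g y" using xy unfolding h_def by (auto split: if_splits)
      moreover have "m x = m y" using \<open>g x = g y\<close> unfolding m_def by simp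
      ultimately show ?thesis using tri[of "m x" x y] m[OF xy(1)] xy False by auto
    qed
  qed
  moreover have "h ` V \<subseteq> (g ` V) <+> D"
  proof
    fix z assume "z \<in> h ` V"
    then obtain x where x: "x \<in> V" "z = h x" by auto
    show "z \<in> (g ` V) <+> D"
    proof (cases "x = m x")
      case True then show ?thesis using x unfolding h_def by auto
    next
      case False
      then have "g x \<in> D" unfolding D_def using m[OF x(1)] x(1) by blast
      then show ?thesis using x False unfolding h_def by auto
    qed
  qed
  moreover have "finite D" unfolding D_def using assms(1) by auto
  ultimately have "card V \<le> card ((g ` V) <+> D)"
    using card_inj_on_le assms(1) by (metis finite_Plus finite_imageI)
  also have "\<dots> = card (g ` V) + card D" using assms(1) \<open>finite D\<close> by (simp add: card_Plus)
  finally show ?thesis unfolding D_def .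
qed

lemma generic:
  assumes hom: "is_hom {1..k} (compl_adj k E) {1..k} (compl_adj k E) g"
    and irr: "\<And>a. \<not> E a a" and sym: "\<And>a b. E a b \<Longrightarrow> E b a"
    and tri: "\<And>a b c. E a b \<Longrightarrow> E b c \<Longrightarrow> E a c \<Longrightarrow> False"
  shows "card ({1..k} - g ` {1..k}) \<le> card {w\<in>g ` {1..k}. \<exists>a\<in>{1..k}. \<exists>b\<in>{1..k}. a \<noteq> b \<and> g a = w \<and> g b = w}"
    and "\<And>w w'. w \<in> {w\<in>g ` {1..k}. \<exists>a\<in>{1..k}. \<exists>b\<in>{1..k}. a \<noteq> b \<and> g a = w \<and> g b = w} \<Longrightarrow> E w w' \<Longrightarrow> w' \<notin> g ` {1..k}"
proof -
  define D where "D = {w\<in>g ` {1..k}. \<exists>a\<in>{1..k}. \<exists>b\<in>{1..k}. a \<noteq> b \<and> g a = w \<and> g b = w}"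
  have img: "g ` {1..k} \<subseteq> {1..k}" using hom unfolding is_hom_def by auto
  have c: "card {1..k} \<le> card (g ` {1..k}) + card D"
    unfolding D_def
  proof (rule count)
    fix a b c assume abc: "a \<in> {1..k}" "b \<in> {1..k}" "c \<in> {1..k}" "a \<noteq> b" "b \<noteq> c" "a \<noteq> c"
      "g a = g b" "g b = g c"
    have "E a b" using hom_prop[OF hom abc(1,2,4)] abc by auto
    moreover have "E b c" using hom_prop[OF hom abc(2,3,5)] abc by auto
    moreover have "E a c" using hom_prop[OF hom abc(1,3,6)] abc by auto
    ultimately show False using tri by blast
  qed simp
  have "card ({1..k} - g ` {1..k}) = card {1..k} - card (g ` {1..k})"
    using img by (simp add: card_Diff_subset)
  then show "card ({1..k} - g ` {1..k}) \<le> card {w\<in>g ` {1..k}. \<exists>a\<in>{1..k}. \<exists>b\<in>{1..k}. a \<noteq> b \<and> g a = w \<and> g b = w}" using c unfolding D_def by simp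
  fix w w' assume w: "w \<in> {w\<in>g ` {1..k}. \<exists>a\<in>{1..k}. \<exists>b\<in>{1..k}. a \<noteq> b \<and> g a = w \<and> g b = w}" "E w w'"
  show "w' \<notin> g ` {1..k}"
  proof
    assume "w' \<in> g ` {1..k}"
    then obtain c where c: "c \<in> {1..k}" "g c = w'" by auto
    obtain a b where ab: "a \<in> {1..k}" "b \<in> {1..k}" "a \<noteq> b" "g a = w" "g b = w"
      using w(1) by blast
    have ww': "w \<noteq> w'" using w(2) irr by auto
    have "E a b" using hom_prop[OF hom ab(1,2,3)] ab by auto
    moreover have "E c a"
    proof (rule ccontr)
      assume "\<not> E c a"
      moreover have "c \<noteq> a" using ab c ww' by auto
      ultimately show False using hom_prop[OF hom c(1) ab(1)] c ab w(2) sym by auto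
    qed
    moreover have "E c b"
    proof (rule ccontr)
      assume "\<not> E c b"
      moreover have "c \<noteq> b" using ab c ww' by auto
      ultimately show False using hom_prop[OF hom c(1) ab(2)] c ab w(2) sym by auto
    qed
    ultimately show False using tri sym by blast
  qed
qed

lemma cycle_case:
  assumes k: "k \<ge> 4"
    and hom: "is_hom {1..k} (compl_adj k (cycle_adj k)) {1..k} (compl_adj k (cycle_adj k)) g"
    and ns: "g ` {1..k} \<noteq> {1..k}"
  shows "\<exists>x\<in>{1..k}. \<exists>y\<in>{1..k}. x \<noteq> y \<and> g x = g y \<and> g x \<in> {1, k}"
proof -
  define D where "D = {w\<in>g ` {1..k}. \<exists>a\<in>{1..k}. \<exists>b\<in>{1..k}. a \<noteq> b \<and> g a = w \<and> g b = w}"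
  define M where "M = {1..k} - g ` {1..k}"
  have G1: "card M \<le> card D" unfolding M_def D_def
    by (rule generic(1)[OF hom], rule irr_cycle[OF k], erule sym_cycle, erule (2) tri_cycle[OF k])
  have G2: "w' \<notin> g ` {1..k}" if "w \<in> D" "cycle_adj k w w'" for w w'
    by (rule generic(2)[OF hom _ _ _ that(1)[unfolded D_def] that(2)], rule irr_cycle[OF k], erule sym_cycle, erule (2) tri_cycle[OF k])
  have img: "g ` {1..k} \<subseteq> {1..k}" using hom unfolding is_hom_def by auto
  have DV: "D \<subseteq> {1..k}" using img unfolding D_def by auto
  define l where "l w = (if w = 1 then k else w - 1)" for w
  have adj: "cycle_adj k w (l w)" if "w \<in> {1..k}" for w
    using that k unfolding l_def cycle_adj_def path_adj_def by auto
  have inj: "inj_on l D"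
  proof (rule inj_onI)
    fix x y assume xy: "x \<in> D" "y \<in> D" "l x = l y"
    then have "x \<in> {1..k}" "y \<in> {1..k}" using DV by auto
    then show "x = y" using xy(3) k unfolding l_def by (simp split: if_splits)
  qed
  have sub: "l ` D \<subseteq> M"
  proof
    fix u assume "u \<in> l ` D"
    then obtain w where w: "w \<in> D" "u = l w" by auto
    have wV: "w \<in> {1..k}" using w(1) DV by auto
    have "u \<notin> g ` {1..k}" using G2[OF w(1) adj[OF wV]] w(2) by simp
    moreover have "u \<in> {1..k}" using wV k w(2) unfolding l_def by auto
    ultimately show "u \<in> M" unfolding M_def by auto
  qed
  have fM: "finite M" unfolding M_def by auto
  have eq: "l ` D = M"
    using card_subset_eq[OF fM sub] card_image[OF inj] G1 card_mono[OF fM sub] by linarith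
  have "M \<noteq> {}" using ns img unfolding M_def by auto
  then have "D \<noteq> {}" using eq by auto
  have fD: "finite D" using DV finite_subset by blast
  define w where "w = Max D"
  have wD: "w \<in> D" using fD \<open>D \<noteq> {}\<close> unfolding w_def by simp
  have wmax: "w' \<le> w" if "w' \<in> D" for w' using fD that unfolding w_def by simp
  have "D \<inter> {1, k} \<noteq> {}"
  proof (rule ccontr)
    assume "\<not> D \<inter> {1, k} \<noteq> {}"
    then have n1: "1 \<notin> D" and nk: "k \<notin> D" by auto
    have wr: "1 \<le> w" "w \<le> k" using wD DV by auto
    have wne: "w \<noteq> 1" "w \<noteq> k" using wD n1 nk by auto
    have "cycle_adj k w (w+1)" using wr wne unfolding cycle_adj_def path_adj_def by simp
    then have "w + 1 \<notin> g ` {1..k}" by (rule G2[OF wD])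
    moreover have "w + 1 \<in> {1..k}" using wr wne by simp
    ultimately have "w + 1 \<in> M" unfolding M_def by simp
    then obtain w' where w': "w' \<in> D" "w + 1 = l w'" using eq by blast
    have "w' \<noteq> 1" using w'(1) n1 by auto
    then have "w + 1 = w' - 1" using w'(2) unfolding l_def by simp
    then show False using wmax[OF w'(1)] by simp
  qed
  then obtain v where v: "v \<in> D" "v \<in> {1, k}" by auto
  then have "\<exists>a\<in>{1..k}. \<exists>b\<in>{1..k}. a \<noteq> b \<and> g a = v \<and> g b = v"
    unfolding D_def by simp
  then obtain a b where ab: "a \<in> {1..k}" "b \<in> {1..k}" "a \<noteq> b" "g a = v" "g b = v"
    by blast
  show ?thesis
    by (rule bexI[of _ a], rule bexI[of _ b]) (use ab v(2) in simp_all)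
qed

lemma path_case:
  assumes k: "k \<ge> 4"
    and hom: "is_hom {1..k} (compl_adj k (path_adj k)) {1..k} (compl_adj k (path_adj k)) g"
    and ns: "g ` {1..k} \<noteq> {1..k}"
  shows "\<exists>x\<in>{1..k}. \<exists>y\<in>{1..k}. x \<noteq> y \<and> g x = g y \<and> g x \<in> {1, k}"
proof -
  define D where "D = {w\<in>g ` {1..k}. \<exists>a\<in>{1..k}. \<exists>b\<in>{1..k}. a \<noteq> b \<and> g a = w \<and> g b = w}"
  define M where "M = {1..k} - g ` {1..k}"
  have G1: "card M \<le> card D" unfolding M_def D_def
    by (rule generic(1)[OF hom], rule irr_path, erule sym_path, erule (2) tri_path)
  have G2: "w' \<notin> g ` {1..k}" if "w \<in> D" "path_adj k w w'" for w w'
    by (rule generic(2)[OF hom _ _ _ that(1)[unfolded D_def] that(2)], rule irr_path, erule sym_path, erule (2) tri_path)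
  have img: "g ` {1..k} \<subseteq> {1..k}" using hom unfolding is_hom_def by auto
  have DV: "D \<subseteq> {1..k}" using img unfolding D_def by auto
  show ?thesis
  proof (rule ccontr)
    assume nt: "\<not> ?thesis"
    have n1: "1 \<notin> D"
    proof
      assume "1 \<in> D"
      then have "\<exists>a\<in>{1..k}. \<exists>b\<in>{1..k}. a \<noteq> b \<and> g a = 1 \<and> g b = 1"
        unfolding D_def by simp
      then obtain a b where ab: "a \<in> {1..k}" "b \<in> {1..k}" "a \<noteq> b" "g a = 1" "g b = 1"
        by blast
      have "\<exists>x\<in>{1..k}. \<exists>y\<in>{1..k}. x \<noteq> y \<and> g x = g y \<and> g x \<in> {1, k}"
        by (rule bexI[of _ a], rule bexI[of _ b]) (use ab in simp_all)
      then show False using nt by (rule notE[rotated])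
    qed
    have nk: "k \<notin> D"
    proof
      assume "k \<in> D"
      then have "\<exists>a\<in>{1..k}. \<exists>b\<in>{1..k}. a \<noteq> b \<and> g a = k \<and> g b = k"
        unfolding D_def by simp
      then obtain a b where ab: "a \<in> {1..k}" "b \<in> {1..k}" "a \<noteq> b" "g a = k" "g b = k"
        by blast
      have "\<exists>x\<in>{1..k}. \<exists>y\<in>{1..k}. x \<noteq> y \<and> g x = g y \<and> g x \<in> {1, k}"
        by (rule bexI[of _ a], rule bexI[of _ b]) (use ab in simp_all)
      then show False using nt by (rule notE[rotated])
    qed
    have Dr: "2 \<le> w \<and> w \<le> k - 1" if "w \<in> D" for w
    proof -
      have "1 \<le> w" "w \<le> k" using that DV by auto
      moreover have "w \<noteq> 1" "w \<noteq> k" using that n1 nk by auto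
      ultimately show ?thesis by simp
    qed
    define l where "l w = w - 1" for w :: nat
    have adj: "path_adj k w (l w)" if "w \<in> D" for w
      using Dr[OF that] unfolding l_def path_adj_def by auto
    have inj: "inj_on l D"
    proof (rule inj_onI)
      fix x y assume xy: "x \<in> D" "y \<in> D" "l x = l y"
      then show "x = y" using Dr[OF xy(1)] Dr[OF xy(2)] unfolding l_def by linarith
    qed
    have sub: "l ` D \<subseteq> M"
    proof
      fix u assume "u \<in> l ` D"
      then obtain w where w: "w \<in> D" "u = l w" by auto
      have "u \<notin> g ` {1..k}" using G2[OF w(1) adj[OF w(1)]] w(2) by simp
      moreover have "u \<in> {1..k}" using Dr[OF w(1)] w(2) unfolding l_def atLeastAtMost_iff by linarith
      ultimately show "u \<in> M" unfolding M_def by simp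
    qed
    have fM: "finite M" unfolding M_def by auto
    have eq: "l ` D = M"
      using card_subset_eq[OF fM sub] card_image[OF inj] G1 card_mono[OF fM sub] by linarith
    have "M \<noteq> {}" using ns img unfolding M_def by auto
    then have "D \<noteq> {}" using eq by auto
    have fD: "finite D" using DV finite_subset by blast
    define w where "w = Max D"
    have wD: "w \<in> D" using fD \<open>D \<noteq> {}\<close> unfolding w_def by simp
    have wmax: "w' \<le> w" if "w' \<in> D" for w' using fD that unfolding w_def by simp
    have wr: "2 \<le> w" "w \<le> k - 1" using Dr[OF wD] by auto
    have "path_adj k w (w+1)" using wr k unfolding path_adj_def atLeastAtMost_iff by linarith
    then have "w + 1 \<notin> g ` {1..k}" by (rule G2[OF wD])
    moreover have "w + 1 \<in> {1..k}" using wr k unfolding atLeastAtMost_iff by linarith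
    ultimately have "w + 1 \<in> M" unfolding M_def by simp
    then obtain w' where w': "w' \<in> D" "w + 1 = l w'" using eq by blast
    then show False using wmax[OF w'(1)] unfolding l_def by linarith
  qed
qed

theorem lemma12:
  shows "(\<forall>k g. k \<ge> 4 \<and> even k
            \<and> is_hom {1..k} (compl_adj k (cycle_adj k)) {1..k} (compl_adj k (cycle_adj k)) g
            \<and> g ` {1..k} \<noteq> {1..k}
          \<longrightarrow> (\<exists>x\<in>{1..k}. \<exists>y\<in>{1..k}. x \<noteq> y \<and> g x = g y \<and> g x \<in> {1, k}))
       \<and> (\<forall>k g. k \<ge> 4
            \<and> is_hom {1..k} (compl_adj k (path_adj k)) {1..k} (compl_adj k (path_adj k)) g
            \<and> g ` {1..k} \<noteq> {1..k}
          \<longrightarrow> (\<exists>x\<in>{1..k}. \<exists>y\<in>{1..k}. x \<noteq> y \<and> g x = g y \<and> g x \<in> {1, k}))"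
  apply (intro conjI allI impI; elim conjE)
   apply (rule cycle_case; assumption)
  apply (rule path_case; assumption)
  done

end
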